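(* A deformation $\mathbf{y}\in H^1(\Omega;\mathbb{R}^3)$ satisfies $\nabla\mathbf{y}^T\nabla\mathbf{y}=g$ a.e. in $\Omega$ (i.e. $\mathbf{y}$ is an isometric immersion of $g$), where $$g=\lambda^2\,\mathbf{m}\otimes\mathbf{m}+\lambda^{-1}\,\mathbf{m}_\perp\otimes\mathbf{m}_\perp,$$ if and only if $\mathbf{y}$ is a global minimizer of $E_{str}$ over $H^1(\Omega;\mathbb{R}^3)$ with $E_{str}[\mathbf{y}]=0$.
   Context: Let $\Omega\subset\mathbb{R}^2$ be a bounded Lipschitz domain, $s,s_0\in L^\infty(\Omega)$ with $-1<s,s_0$ in $\Omega$, $\lambda=\big(\tfrac{s+1}{s_0+1}\big)^{1/3}$, $\mathbf{m}:\Omega\to\mathbb{S}^1$ the blueprinted director field and $\mathbf{m}_\perp:\Omega\to\mathbb{S}^1$ a field perpendicular to $\mathbf{m}$ everywhere. For $\mathbf{x}'\in\Omega$ and $\mathbf{F}\in\mathbb{R}^{3\times2}$ of rank 2, let $\mathrm{I}(\mathbf{F})=\mathbf{F}^T\mathbf{F}$, $J(\mathbf{F})=\det\mathrm{I}(\mathbf{F})$, $C_{\mathbf{m}}(\mathbf{F})=\mathbf{m}(\mathbf{x}')\cdot\mathrm{I}(\mathbf{F})\mathbf{m}(\mathbf{x}')$, and $$W_{str}(\mathbf{x}',\mathbf{F})=\lambda\Big[\frac{1}{J(\mathbf{F})}+\frac{1}{s+1}\Big(\operatorname{tr}\mathrm{I}(\mathbf{F})+s_0\,C_{\mathbf{m}}(\mathbf{F})+s\,\frac{J(\mathbf{F})}{C_{\mathbf{m}}(\mathbf{F})}\Big)\Big]-3,$$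 with $s,s_0,\lambda$ evaluated at $\mathbf{x}'$. The stretching energy is $E_{str}[\mathbf{y}]=\int_\Omega W_{str}(\mathbf{x}',\nabla\mathbf{y}(\mathbf{x}'))\,d\mathbf{x}'$ for $\mathbf{y}\in H^1(\Omega;\mathbb{R}^3)$. *)

theory Defs
  imports "HOL-Analysis.Analysis"
begin

text \<open>Points of the plane are \<open>real^2\<close>; deformations take values in \<open>real^3\<close>;
  deformation gradients are 3x2 matrices \<open>real^2^3\<close> (rows indexed by 3, columns by 2).\<close>

definition lipschitz_boundary :: "(real^2) set \<Rightarrow> bool" where
  "lipschitz_boundary \<Omega> \<longleftrightarrow>
     (\<forall>p \<in> frontier \<Omega>. \<exists>r>0. \<exists>Q::real^2^2. \<exists>h::real \<Rightarrow> real. \<exists>L.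
        orthogonal_matrix Q \<and> L-lipschitz_on UNIV h \<and>
        (\<forall>x \<in> ball p r. x \<in> \<Omega> \<longleftrightarrow> (Q *v (x - p)) $ 2 > h ((Q *v (x - p)) $ 1)))"

definition bounded_lipschitz_domain :: "(real^2) set \<Rightarrow> bool" where
  "bounded_lipschitz_domain \<Omega> \<longleftrightarrow>
     open \<Omega> \<and> connected \<Omega> \<and> \<Omega> \<noteq> {} \<and> bounded \<Omega> \<and> lipschitz_boundary \<Omega>"

definition Linf_on :: "(real^2) set \<Rightarrow> (real^2 \<Rightarrow> real) \<Rightarrow> bool" where
  "Linf_on \<Omega> f \<longleftrightarrow> (\<lambda>x. indicator \<Omega> x * f x) \<in> borel_measurable lebesgue \<and>
     (\<exists>C. AE x in lebesgue. x \<in> \<Omega> \<longrightarrow> \<bar>f x\<bar> \<le> C)"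

definition L2_on :: "(real^2) set \<Rightarrow> (real^2 \<Rightarrow> real) \<Rightarrow> bool" where
  "L2_on \<Omega> f \<longleftrightarrow> (\<lambda>x. indicator \<Omega> x * f x) \<in> borel_measurable lebesgue \<and>
     integrable lebesgue (\<lambda>x. indicator \<Omega> x * (f x)\<^sup>2)"

text \<open>\<open>C^\<infinity>\<close> functions on the plane (greatest fixed point: differentiable everywhere and
  all partial derivatives again \<open>C^\<infinity>\<close>).\<close>
coinductive smooth :: "(real^2 \<Rightarrow> real) \<Rightarrow> bool" where
  "(\<forall>x. f differentiable (at x)) \<Longrightarrow>
   (\<forall>j. smooth (\<lambda>x. frechet_derivative f (at x) (axis j 1))) \<Longrightarrow> smooth f"

definition partial :: "(real^2 \<Rightarrow> real) \<Rightarrow> 2 \<Rightarrow> real^2 \<Rightarrow> real" where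
  "partial \<phi> j x = frechet_derivative \<phi> (at x) (axis j 1)"

definition test_fun :: "(real^2) set \<Rightarrow> (real^2 \<Rightarrow> real) \<Rightarrow> bool" where
  "test_fun \<Omega> \<phi> \<longleftrightarrow> smooth \<phi> \<and> compact (closure {x. \<phi> x \<noteq> 0}) \<and>
     closure {x. \<phi> x \<noteq> 0} \<subseteq> \<Omega>"

definition is_H1_grad :: "(real^2) set \<Rightarrow> (real^2 \<Rightarrow> real^3) \<Rightarrow> (real^2 \<Rightarrow> real^2^3) \<Rightarrow> bool" where
  "is_H1_grad \<Omega> y Dy \<longleftrightarrow>
     (\<forall>i. L2_on \<Omega> (\<lambda>x. y x $ i)) \<and> (\<forall>i j. L2_on \<Omega> (\<lambda>x. Dy x $ i $ j)) \<and>
     (\<forall>i j \<phi>. test_fun \<Omega> \<phi> \<longrightarrow>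
        set_lebesgue_integral lebesgue \<Omega> (\<lambda>x. y x $ i * partial \<phi> j x) =
        - set_lebesgue_integral lebesgue \<Omega> (\<lambda>x. Dy x $ i $ j * \<phi> x))"

definition H1 :: "(real^2) set \<Rightarrow> (real^2 \<Rightarrow> real^3) \<Rightarrow> bool" where
  "H1 \<Omega> y \<longleftrightarrow> (\<exists>Dy. is_H1_grad \<Omega> y Dy)"

text \<open>The (weak) gradient of an \<open>H^1\<close> map (determined up to a null set).\<close>
definition grad :: "(real^2) set \<Rightarrow> (real^2 \<Rightarrow> real^3) \<Rightarrow> real^2 \<Rightarrow> real^2^3" where
  "grad \<Omega> y = (SOME Dy. is_H1_grad \<Omega> y Dy)"

definition lam :: "real \<Rightarrow> real \<Rightarrow> real" where
  "lam s s0 = ((s + 1) / (s0 + 1)) powr (1/3)"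

definition fform :: "real^2^3 \<Rightarrow> real^2^2" where
  "fform F = transpose F ** F"

definition Jf :: "real^2^3 \<Rightarrow> real" where
  "Jf F = det (fform F)"

definition Cm :: "real^2 \<Rightarrow> real^2^3 \<Rightarrow> real" where
  "Cm m F = m \<bullet> (fform F *v m)"

text \<open>Stretching energy density; defined as \<open>+\<infinity>\<close> for rank-deficient \<open>F\<close>
  (where the formula is undefined).\<close>
definition W_str :: "real \<Rightarrow> real \<Rightarrow> real^2 \<Rightarrow> real^2^3 \<Rightarrow> ereal" where
  "W_str s s0 m F =
     (if rank F = 2 then
        ereal (lam s s0 * (1 / Jf F + (1 / (s + 1)) *
                 (trace (fform F) + s0 * Cm m F + s * Jf F / Cm m F)) - 3)
      else \<infinity>)"

definition E_str :: "(real^2) set \<Rightarrow> (real^2 \<Rightarrow> real) \<Rightarrow> (real^2 \<Rightarrow> real) \<Rightarrow> (real^2 \<Rightarrow> real^2)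
    \<Rightarrow> (real^2 \<Rightarrow> real^3) \<Rightarrow> ereal" where
  "E_str \<Omega> s s0 m y =
     enn2ereal (\<integral>\<^sup>+ x. indicator \<Omega> x * e2ennreal (W_str (s x) (s0 x) (m x) (grad \<Omega> y x)) \<partial>lebesgue)
   - enn2ereal (\<integral>\<^sup>+ x. indicator \<Omega> x * e2ennreal (- W_str (s x) (s0 x) (m x) (grad \<Omega> y x)) \<partial>lebesgue)"

definition outer2 :: "real^2 \<Rightarrow> real^2 \<Rightarrow> real^2^2" where
  "outer2 a b = (\<chi> i j. a $ i * b $ j)"

definition gmetric :: "real \<Rightarrow> real \<Rightarrow> real^2 \<Rightarrow> real^2 \<Rightarrow> real^2^2" where
  "gmetric s s0 m mp = (lam s s0)\<^sup>2 *\<^sub>R outer2 m m + inverse (lam s s0) *\<^sub>R outer2 mp mp"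

end

theory Submission imports Defs begin

lemma key_real:
  fixes L s s0 a b c J :: real
  assumes L: "L > 0" and s: "s > -1" and s0: "s0 > -1" and L3: "L^3 * (s0 + 1) = s + 1"
    and a: "a > 0" and J: "J > 0" and Jd: "J = a*b - c^2"
  shows "L*(1/J + (1/(s+1))*((a+b) + s0*a + s*J/a)) - 3 \<ge> 0 \<and>
        (L*(1/J + (1/(s+1))*((a+b) + s0*a + s*J/a)) - 3 = 0 \<longleftrightarrow> a = L^2 \<and> b = inverse L \<and> c = 0)"
proof -
  define t where "t = sqrt (J / L)"
  have t: "t > 0" using J L by (simp add: t_def)
  have Jt: "J = L * t^2" using J L by (simp add: t_def)
  define \<alpha> where "\<alpha> = a / L^2"
  have al: "\<alpha> > 0" using a L by (simp add: \<alpha>_def)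
  have aa: "a = L^2 * \<alpha>" using L by (simp add: \<alpha>_def)
  have b: "b = (J + c^2)/a" using a Jd by (simp add: field_simps)
  have s1: "s + 1 > 0" using s by simp
  have eq: "L*(1/J + (1/(s+1))*((a+b) + s0*a + s*J/a)) - 3
     = (\<alpha> - t)^2/\<alpha> + (t-1)^2*(2*t+1)/t^2 + L*c^2/(a*(s+1))"
  proof -
    have "L*(1/J + (1/(s+1))*((a+b) + s0*a + s*J/a)) = L/J + L*(s0+1)*a/(s+1) + L*J/a + L*c^2/(a*(s+1))"
    proof -
      have ne: "a \<noteq> 0" "J \<noteq> 0" "s + 1 \<noteq> 0" "1 + s \<noteq> 0" using a J s1 by auto
      show ?thesis unfolding b using ne by (simp add: divide_simps) (simp add: algebra_simps power2_eq_square)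
    qed
    also have "L*(s0+1)*a/(s+1) = \<alpha>"
      using L3[symmetric] L aa s1 by (simp add: field_simps power2_eq_square power3_eq_cube)
    also have "L/J = 1/t^2" using Jt L t by simp
    also have "L*J/a = t^2/\<alpha>" using Jt aa L by (simp add: field_simps power2_eq_square)
    finally show ?thesis using t al by (simp add: field_simps power2_eq_square) 
  qed
  have n1: "(\<alpha> - t)^2/\<alpha> \<ge> 0" using al by simp
  have n2: "(t-1)^2*(2*t+1)/t^2 \<ge> 0" using t by simp
  have n3: "L*c^2/(a*(s+1)) \<ge> 0" using L a s1 by simp
  show ?thesis
  proof (intro conjI)
    show "L*(1/J + (1/(s+1))*((a+b) + s0*a + s*J/a)) - 3 \<ge> 0" using eq n1 n2 n3 by linarith
    show "(L*(1/J + (1/(s+1))*((a+b) + s0*a + s*J/a)) - 3 = 0) = (a = L^2 \<and> b = inverse L \<and> c = 0)"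
    proof
      assume "L*(1/J + (1/(s+1))*((a+b) + s0*a + s*J/a)) - 3 = 0"
      then have z1: "(\<alpha> - t)^2/\<alpha> = 0" and z2: "(t-1)^2*(2*t+1)/t^2 = 0" and z3: "L*c^2/(a*(s+1)) = 0"
        using eq n1 n2 n3 by linarith+
      from z2 t have t1: "t = 1" by simp
      from z1 al t1 have "\<alpha> = 1" by simp
      moreover from z3 L a s1 have "c = 0" by simp
      ultimately show "a = L^2 \<and> b = inverse L \<and> c = 0"
        using aa b Jt t1 L by (simp add: field_simps power2_eq_square)
    next
      assume h: "a = L^2 \<and> b = inverse L \<and> c = 0"
      then have "J = L" using Jd L by (simp add: field_simps power2_eq_square)
      then have "t = 1" using L by (simp add: t_def)
      moreover have "\<alpha> = 1" using h L by (simp add: \<alpha>_def)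
      ultimately show "L*(1/J + (1/(s+1))*((a+b) + s0*a + s*J/a)) - 3 = 0" using eq h by simp
    qed
  qed
qed

lemma fform_entry: "fform F $ j $ k = F$1$j*F$1$k + F$2$j*F$2$k + F$3$j*F$3$k"
  by (simp add: fform_def matrix_matrix_mult_def transpose_def sum_3)

lemma Jf_expand: "Jf F = fform F$1$1 * fform F$2$2 - fform F$1$2 * fform F$2$1"
  by (simp add: Jf_def det_2)

lemma trace_expand: "trace (fform F) = fform F$1$1 + fform F$2$2"
  by (simp add: trace_def sum_2)

lemma Cm_expand: "Cm m F = m$1*(fform F$1$1*m$1 + fform F$1$2*m$2) + m$2*(fform F$2$1*m$1 + fform F$2$2*m$2)"
  by (simp add: Cm_def inner_vec_def matrix_vector_mult_def sum_2)

lemma Jf_lagrange: "Jf F = (F$1$1*F$2$2-F$2$1*F$1$2)^2 + (F$1$1*F$3$2 - F$3$1*F$1$2)^2 + (F$2$1*F$3$2-F$3$1*F$2$2)^2"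
  unfolding Jf_expand fform_entry by (simp add: algebra_simps power2_eq_square)

lemma Jf_nonneg: "Jf F \<ge> 0"
  unfolding Jf_lagrange by simp

lemma rank_iff: "rank (F::real^2^3) = 2 \<longleftrightarrow> Jf F \<noteq> 0"
proof -
  have "(\<exists>x. x \<noteq> 0 \<and> F *v x = 0) \<longleftrightarrow> Jf F = 0"
  proof
    assume "\<exists>x. x \<noteq> 0 \<and> F *v x = 0"
    then obtain x where x: "x \<noteq> 0" "F *v x = 0" by blast
    have e: "F$k$1*x$1 + F$k$2*x$2 = 0" for k
      using arg_cong[OF x(2), of "\<lambda>v. v $ k"] by (simp add: matrix_vector_mult_def sum_2)
    have x12: "x$1 \<noteq> 0 \<or> x$2 \<noteq> 0"
      using x(1) by (metis (full_types) exhaust_2 vec_eq_iff zero_index)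
    have r1: "Jf F * x$1 = 0" and r2: "Jf F * x$2 = 0"
      unfolding Jf_expand fform_entry using e[of 1] e[of 2] e[of 3] by algebra+
    show "Jf F = 0" using x12 r1 r2 by auto
  next
    assume J: "Jf F = 0"
    have m1: "F$1$1*F$2$2-F$2$1*F$1$2 = 0" and m2: "F$1$1*F$3$2 - F$3$1*F$1$2 = 0"
      and m3: "F$2$1*F$3$2-F$3$1*F$2$2 = 0"
      using J unfolding Jf_lagrange by (simp_all add: add_nonneg_eq_0_iff)
    have mv: "F *v y = 0" if "\<And>k. F$k$1*y$1 + F$k$2*y$2 = 0" for y :: "real^2"
      using that by (simp add: vec_eq_iff matrix_vector_mult_def sum_2)
    show "\<exists>x. x \<noteq> 0 \<and> F *v x = 0"
    proof (cases "F$1$1 \<noteq> 0 \<or> F$2$1 \<noteq> 0 \<or> F$3$1 \<noteq> 0")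
      case True
      then obtain i where i: "F$i$1 \<noteq> 0" by blast
      define x :: "real^2" where "x = vector [F$i$2, - F$i$1]"
      have "x \<noteq> 0" using i by (metis x_def vector_2(2) zero_index neg_equal_0_iff_equal)
      moreover have "F *v x = 0"
      proof (rule mv)
        fix k :: 3
        have "F$k$1*F$i$2 - F$k$2*F$i$1 = 0"
          using m1 m2 m3 exhaust_3[of i] exhaust_3[of k] by (auto simp: algebra_simps)
        then show "F$k$1*x$1 + F$k$2*x$2 = 0" by (simp add: x_def)
      qed
      ultimately show ?thesis by blast
    next
      case False
      define x :: "real^2" where "x = vector [1, 0]"
      have "x \<noteq> 0" by (metis x_def vector_2(1) zero_index zero_neq_one)
      moreover have "F *v x = 0"
        proof (rule mv)
        fix k :: 3 show "F$k$1*x$1 + F$k$2*x$2 = 0" using False exhaust_3[of k] by (auto simp: x_def)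
      qed
      ultimately show ?thesis by blast
    qed
  qed
  then show ?thesis using matrix_nonfull_linear_equations_eq[of F] by auto
qed


lemma lam_props:
  assumes "s > -1" "s0 > -1"
  shows "lam s s0 > 0" "(lam s s0)^3 * (s0 + 1) = s + 1"
proof -
  have q: "(s+1)/(s0+1) > 0" using assms by simp
  then show "lam s s0 > 0" using assms by (simp add: lam_def)
  have "(lam s s0)^3 = (lam s s0) powr (real 3)"
    using \<open>(s+1)/(s0+1) > 0\<close> by (simp add: lam_def powr_realpow)
  also have "\<dots> = (s+1)/(s0+1)" using q assms by (simp add: lam_def powr_powr)
  finally show "(lam s s0)^3 * (s0 + 1) = s + 1" using assms by simp
qed

lemma gmetric_entry: "gmetric s s0 m mp $ j $ k = (lam s s0)^2 * m$j*m$k + inverse (lam s s0) * mp$j*mp$k"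
  by (simp add: gmetric_def outer2_def)

lemma pointwise:
  fixes F :: "real^2^3"
  assumes s: "s > -1" and s0: "s0 > -1" and nm: "norm m = 1" and np: "norm mp = 1" and o: "mp \<bullet> m = 0"
  shows "W_str s s0 m F \<ge> 0 \<and> (W_str s s0 m F = 0 \<longleftrightarrow> fform F = gmetric s s0 m mp)"
proof -
  define L where "L = lam s s0"
  define K where "K = inverse L"
  have L: "L > 0" and L3: "L^3 * (s0 + 1) = s + 1" using lam_props[OF s s0] by (auto simp: L_def)
  have KL: "K * L = 1" using L by (simp add: K_def)
  define m1 where "m1 = m$1"
  define m2 where "m2 = m$2"
  define p1 where "p1 = mp$1"
  define p2 where "p2 = mp$2"
  have mm: "m1^2 + m2^2 = 1" using nm unfolding m1_def m2_def
    by (simp add: norm_eq_sqrt_inner inner_vec_def sum_2 power2_eq_square)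
  have pp: "p1^2 + p2^2 = 1" using np unfolding p1_def p2_def
    by (simp add: norm_eq_sqrt_inner inner_vec_def sum_2 power2_eq_square)
  have mp0: "m1*p1 + m2*p2 = 0" using o unfolding m1_def m2_def p1_def p2_def
    by (simp add: inner_vec_def sum_2 algebra_simps)
  define d where "d = m1*p2 - m2*p1"
  have p1e: "p1 = - d * m2" unfolding d_def using mm mp0 by algebra
  have p2e: "p2 = d * m1" unfolding d_def using mm mp0 by algebra
  have dd: "d^2 = 1" using pp mm unfolding p1e p2e by algebra
  define u where "u = fform F $1$1"
  define z where "z = fform F $2$2"
  define w where "w = fform F $1$2"
  have w21: "fform F $2$1 = w" unfolding w_def fform_entry by simp
  define a where "a = u*m1^2 + 2*w*m1*m2 + z*m2^2"
  define b where "b = u*m2^2 - 2*w*m1*m2 + z*m1^2"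
  define c where "c = -u*m1*m2 + w*(m1^2-m2^2) + z*m1*m2"
  have Cma: "Cm m F = a" unfolding Cm_expand a_def u_def z_def w_def m1_def m2_def w21[unfolded w_def]
    by (simp add: algebra_simps power2_eq_square)
  have tra: "trace (fform F) = a + b" unfolding trace_expand a_def b_def u_def[symmetric] z_def[symmetric]
    using mm by algebra
  have Jfe: "Jf F = a*b - c^2" unfolding Jf_expand a_def b_def c_def u_def[symmetric] z_def[symmetric]
    w_def[symmetric] w21 using mm by algebra
  have a0: "a \<ge> 0"
  proof -
    have "a = (F$1$1*m1+F$1$2*m2)^2 + (F$2$1*m1+F$2$2*m2)^2 + (F$3$1*m1+F$3$2*m2)^2"
      unfolding a_def u_def z_def w_def fform_entry by algebra
    then show ?thesis by simp
  qed
  have geq: "fform F = gmetric s s0 m mp \<longleftrightarrow>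
      u = L^2*m1^2 + K*m2^2 \<and> w = (L^2 - K)*m1*m2 \<and> z = L^2*m2^2 + K*m1^2"
  proof -
    have "fform F = gmetric s s0 m mp \<longleftrightarrow> (\<forall>j k. fform F $ j $ k = gmetric s s0 m mp $ j $ k)"
      by (simp add: vec_eq_iff)
    also have "\<dots> \<longleftrightarrow> u = L^2*m1*m1 + K*p1*p1 \<and> w = L^2*m1*m2 + K*p1*p2 \<and> 
         w = L^2*m2*m1 + K*p2*p1 \<and> z = L^2*m2*m2 + K*p2*p2"
      unfolding forall_2 gmetric_entry w21 by (simp add: u_def z_def w_def L_def K_def m1_def m2_def p1_def p2_def)
    also have "\<dots> \<longleftrightarrow> u = L^2*m1^2 + K*m2^2 \<and> w = (L^2 - K)*m1*m2 \<and> z = L^2*m2^2 + K*m1^2"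
    proof -
      have "p1*p1 = m2^2" "p2*p2 = m1^2" "p1*p2 = - m1*m2" unfolding p1e p2e using dd by algebra+
      then show ?thesis by (auto simp: algebra_simps power2_eq_square)
    qed
    finally show ?thesis .
  qed
  show ?thesis
  proof (cases "rank F = 2")
    case False
    then have J0: "Jf F = 0" using rank_iff by blast
    have "fform F \<noteq> gmetric s s0 m mp"
    proof
      assume "fform F = gmetric s s0 m mp"
      then have "u = L^2*m1^2 + K*m2^2 \<and> w = (L^2 - K)*m1*m2 \<and> z = L^2*m2^2 + K*m1^2" using geq by blast
      then have "Jf F = L" unfolding Jf_expand u_def[symmetric] z_def[symmetric] w_def[symmetric] w21
        using mm KL by algebra
      then show False using J0 L by simp
    qed
    then show ?thesis using False by (simp add: W_str_def)
  next
    case True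
    then have J: "Jf F > 0" using rank_iff Jf_nonneg by (metis less_eq_real_def)
    have a: "a > 0"
    proof (rule ccontr)
      assume "\<not> a > 0" then have "a = 0" using a0 by simp
      then have "Jf F \<le> 0" using Jfe by simp
      then show False using J by simp
    qed
    have K: "K = inverse L" by (simp add: K_def)
    note kr = key_real[OF L s s0 L3 a J Jfe]
    have W: "W_str s s0 m F = ereal (L*(1/Jf F + (1/(s+1))*((a+b) + s0*a + s*Jf F/a)) - 3)"
      using True by (simp add: W_str_def tra Cma L_def)
    have "(a = L^2 \<and> b = inverse L \<and> c = 0) \<longleftrightarrow>
      (u = L^2*m1^2 + K*m2^2 \<and> w = (L^2 - K)*m1*m2 \<and> z = L^2*m2^2 + K*m1^2)"
    proof
      assume h: "a = L^2 \<and> b = inverse L \<and> c = 0"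
      then have h': "a = L^2" "b = K" "c = 0" by (auto simp: K)
      show "u = L^2*m1^2 + K*m2^2 \<and> w = (L^2 - K)*m1*m2 \<and> z = L^2*m2^2 + K*m1^2"
        using h' mm unfolding a_def b_def c_def by algebra
    next
      assume h: "u = L^2*m1^2 + K*m2^2 \<and> w = (L^2 - K)*m1*m2 \<and> z = L^2*m2^2 + K*m1^2"
      have "a = L^2" "b = K" "c = 0" using h mm unfolding a_def b_def c_def by algebra+
      then show "a = L^2 \<and> b = inverse L \<and> c = 0" by (simp add: K)
    qed
    then show ?thesis using W kr geq by simp
  qed
qed


lemma open_sets_lebesgue: "open (A::(real^2) set) \<Longrightarrow> A \<in> sets lebesgue"
  by (simp add: borel_open)

lemma W_meas:
  fixes G :: "real^2 \<Rightarrow> real^2^3" and \<Omega> :: "(real^2) set"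
  assumes Gm: "\<And>i j. (\<lambda>x. G x $ i $ j) \<in> borel_measurable lebesgue"
    and mm: "\<And>i. (\<lambda>x. m x $ i) \<in> borel_measurable lebesgue"
    and sm: "s \<in> borel_measurable lebesgue" and s0m: "s0 \<in> borel_measurable lebesgue"
  shows "(\<lambda>x. W_str (s x) (s0 x) (m x) (G x)) \<in> borel_measurable lebesgue"
proof -
  have e: "W_str (s x) (s0 x) (m x) (G x) = (if Jf (G x) \<noteq> 0 then
        ereal (lam (s x) (s0 x) * (1 / Jf (G x) + (1 / (s x + 1)) *
                 (trace (fform (G x)) + s0 x * Cm (m x) (G x) + s x * Jf (G x) / Cm (m x) (G x))) - 3)
      else \<infinity>)" for x
    by (simp add: W_str_def rank_iff)
  show ?thesis unfolding e Jf_expand trace_expand Cm_expand fform_entry lam_def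
    using Gm mm sm s0m by measurable
qed


theorem corollary2p4:
  fixes \<Omega> :: "(real^2) set"
    and s s0 :: "real^2 \<Rightarrow> real"
    and m mp :: "real^2 \<Rightarrow> real^2"
    and y :: "real^2 \<Rightarrow> real^3"
  assumes "bounded_lipschitz_domain \<Omega>"
    and "Linf_on \<Omega> s" and "Linf_on \<Omega> s0"
    and "\<forall>x\<in>\<Omega>. -1 < s x" and "\<forall>x\<in>\<Omega>. -1 < s0 x"
    and "(\<lambda>x. indicator \<Omega> x *\<^sub>R m x) \<in> borel_measurable lebesgue"
    and "\<forall>x\<in>\<Omega>. norm (m x) = 1"
    and "\<forall>x\<in>\<Omega>. norm (mp x) = 1 \<and> mp x \<bullet> m x = 0"
    and "H1 \<Omega> y"
  shows "(AE x in lebesgue. x \<in> \<Omega> \<longrightarrow>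
            transpose (grad \<Omega> y x) ** grad \<Omega> y x = gmetric (s x) (s0 x) (m x) (mp x))
         \<longleftrightarrow> ((\<forall>z. H1 \<Omega> z \<longrightarrow> E_str \<Omega> s s0 m y \<le> E_str \<Omega> s s0 m z) \<and> E_str \<Omega> s s0 m y = 0)"
proof -
  note A = assms
  have pw: "W_str (s x) (s0 x) (m x) F \<ge> 0 \<and>
      (W_str (s x) (s0 x) (m x) F = 0 \<longleftrightarrow> fform F = gmetric (s x) (s0 x) (m x) (mp x))"
    if "x \<in> \<Omega>" for x F
    using pointwise[of "s x" "s0 x" "m x" "mp x" F] A(4,5,7,8) that by auto
  define P where "P z = (\<integral>\<^sup>+ x. indicator \<Omega> x * e2ennreal (W_str (s x) (s0 x) (m x) (grad \<Omega> z x)) \<partial>lebesgue)" for z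
  have E: "E_str \<Omega> s s0 m z = enn2ereal (P z)" for z
  proof -
    have "(\<integral>\<^sup>+ x. indicator \<Omega> x * e2ennreal (- W_str (s x) (s0 x) (m x) (grad \<Omega> z x)) \<partial>lebesgue) = 0"
    proof -
      have "indicator \<Omega> x * e2ennreal (- W_str (s x) (s0 x) (m x) (grad \<Omega> z x)) = 0" for x
        using pw[of x "grad \<Omega> z x"] by (cases "x \<in> \<Omega>") (auto intro!: e2ennreal_neg)
      then show ?thesis by (simp del: mult_eq_0_iff)
    qed
    then show ?thesis by (simp add: E_str_def P_def zero_ennreal.rep_eq)
  qed
  have rhs: "((\<forall>z. H1 \<Omega> z \<longrightarrow> E_str \<Omega> s s0 m y \<le> E_str \<Omega> s s0 m z) \<and> E_str \<Omega> s s0 m y = 0)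
     \<longleftrightarrow> P y = 0"
  proof -
    have "enn2ereal (P z) \<ge> 0" for z by (rule enn2ereal_nonneg)
    moreover have "enn2ereal (P y) = 0 \<longleftrightarrow> P y = 0"
      by (metis enn2ereal_inject zero_ennreal.rep_eq)
    ultimately show ?thesis unfolding E by auto
  qed
  have Gy: "is_H1_grad \<Omega> y (grad \<Omega> y)"
    using A(9) unfolding H1_def grad_def by (rule someI_ex)
  have Om: "\<Omega> \<in> sets lebesgue"
    using A(1) by (simp add: bounded_lipschitz_domain_def open_sets_lebesgue)
  have meas: "(\<lambda>x. indicator \<Omega> x * e2ennreal (W_str (s x) (s0 x) (m x) (grad \<Omega> y x))) \<in> borel_measurable lebesgue"
  proof -
    define s' where "s' x = indicator \<Omega> x * s x" for x
    define s0' where "s0' x = indicator \<Omega> x * s0 x" for x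
    define m' where "m' x = indicator \<Omega> x *\<^sub>R m x" for x
    define G' where "G' x = indicator \<Omega> x *\<^sub>R grad \<Omega> y x" for x
    have eq: "indicator \<Omega> x * e2ennreal (W_str (s x) (s0 x) (m x) (grad \<Omega> y x)) =
       indicator \<Omega> x * e2ennreal (W_str (s' x) (s0' x) (m' x) (G' x))" for x
      by (cases "x \<in> \<Omega>") (simp_all add: s'_def s0'_def m'_def G'_def)
    have Gm: "(\<lambda>x. G' x $ i $ j) \<in> borel_measurable lebesgue" for i j
      using Gy unfolding is_H1_grad_def L2_on_def G'_def by simp
    have mm: "(\<lambda>x. m' x $ i) \<in> borel_measurable lebesgue" for i
      using measurable_compose[OF A(6) borel_measurable_nth[of i]] unfolding m'_def by simp
    have sm: "s' \<in> borel_measurable lebesgue" "s0' \<in> borel_measurable lebesgue"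
      using A(2,3) unfolding Linf_on_def s'_def s0'_def by auto
    have W: "(\<lambda>x. W_str (s' x) (s0' x) (m' x) (G' x)) \<in> borel_measurable lebesgue"
      by (rule W_meas[OF Gm mm sm])
    show ?thesis unfolding eq using W Om by measurable
  qed
  have "P y = 0 \<longleftrightarrow> (AE x in lebesgue. indicator \<Omega> x * e2ennreal (W_str (s x) (s0 x) (m x) (grad \<Omega> y x)) = 0)"
    unfolding P_def using meas by (rule nn_integral_0_iff_AE)
  also have "\<dots> \<longleftrightarrow> (AE x in lebesgue. x \<in> \<Omega> \<longrightarrow>
            transpose (grad \<Omega> y x) ** grad \<Omega> y x = gmetric (s x) (s0 x) (m x) (mp x))"
  proof (rule AE_cong)
    fix x
    show "(indicator \<Omega> x * e2ennreal (W_str (s x) (s0 x) (m x) (grad \<Omega> y x)) = 0) =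
         (x \<in> \<Omega> \<longrightarrow> transpose (grad \<Omega> y x) ** grad \<Omega> y x = gmetric (s x) (s0 x) (m x) (mp x))"
    proof (cases "x \<in> \<Omega>")
      case True
      define W where "W = W_str (s x) (s0 x) (m x) (grad \<Omega> y x)"
      have "W \<ge> 0" and Wz: "W = 0 \<longleftrightarrow> fform (grad \<Omega> y x) = gmetric (s x) (s0 x) (m x) (mp x)"
        using pw[OF True, of "grad \<Omega> y x"] by (auto simp: W_def)
      have "e2ennreal W = 0 \<longleftrightarrow> W = 0"
      proof
        assume "e2ennreal W = 0"
        then have "enn2ereal (e2ennreal W) = 0" by (simp add: zero_ennreal.rep_eq)
        then show "W = 0" using \<open>W \<ge> 0\<close> by (simp add: enn2ereal_e2ennreal)
      qed (simp add: e2ennreal_neg)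
      then show ?thesis using True Wz by (simp add: W_def fform_def)
    qed simp
  qed
  finally show ?thesis using rhs by simp
qed

end
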